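(* Let $n\ge1$, $1\le k\le n$, $\ell\ge1$, $r:=n(n+1)/2$, $\Sigma\in\mathbb{S}^n$, and let $\tilde\varphi$ be the single-layer objective described in the context. Let $D>0$ and $$\mathcal{D}:=\{(A,b,C,d)\in\mathbb{R}^{\ell\times r}\times\mathbb{R}^\ell\times\mathbb{R}^{nk\times\ell}\times\mathbb{R}^{nk}: \|(A,b,C,d)\|\le D\}.$$ Then the function $\Theta=(A,b,C,d)\mapsto \frac{\partial\tilde\varphi(\Theta)}{\partial b}\in\mathbb{R}^\ell$ is Lipschitz continuous on $\mathcal{D}$ with a constant $L_b$ for which $$L_b^2=\mathcal{C}_b\, n^2D^2\max\{\ell D^2L_Z^2,\ \ell^2D^6L_Z^2,\ \ell^3D^4,\ n\ell\},$$ where $L_Z:=\sqrt{1+\|\Sigma\|_S^2}$ and $\mathcal{C}_b$ is a constant that only depends polynomially on $\sigma'_{\max},\sigma''_{\max},\mu''_{\max}$.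
   Context: $\mathbb{S}^n$ denotes the real symmetric $n\times n$ matrices. $h:\mathbb{S}^n\to\mathbb{R}^{n(n+1)/2}$, $h(\Sigma)=(\Sigma_{1,1},\dots,\Sigma_{1,n},\Sigma_{2,2},\dots,\Sigma_{2,n},\dots,\Sigma_{n,n})^T$, and $\|\Sigma\|_S:=\|h(\Sigma)\|$ (Euclidean norm). $g:\mathbb{R}^{nk}\to\mathbb{R}^{n\times k}$ maps $v$ to $W$ with $W_{i,j}=v_{(i-1)k+j}$. The activation $\sigma:\mathbb{R}\to[-1,1]$ is twice differentiable with $|\sigma'|\le\sigma'_{\max}$ ($\sigma'_{\max}>0$) and $|\sigma''|\le\sigma''_{\max}$; $\tilde\sigma(u):=(\sigma(u_1),\dots,\sigma(u_\ell))^T$. $\mu:\mathbb{R}\to\mathbb{R}$ is smooth with $|\mu'|\le1$, $|\mu''|\le\mu''_{\max}$. For $\Theta=(A,b,C,d)$ with $A\in\mathbb{R}^{\ell\times r}$, $b\in\mathbb{R}^\ell$, $C\in\mathbb{R}^{nk\times\ell}$, $d\in\mathbb{R}^{nk}$, the single-layer network is $\mathcal{N}^\Theta(x):=C\tilde\sigma(Ax+b)+d$, and with $M_\Theta:=g(\mathcal{N}^\Theta(h(\Sigma)))$, $\tilde\varphi(\Theta):=\sum_{i,j=1}^n\mu\big([M_\Theta M_\Theta^T-\Sigma]_{i,j}\big)$. The norm of a list of matrices is $\|(X^1,\dots,X^\gamma)\|:=(\sum_i\|X^i\|_F^2)^{1/2}$, and Lipschitz continuity is with respect to this norm on parameters and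 the Euclidean norm on $\mathbb{R}^\ell$. *)

theory Defs
  imports "HOL-Analysis.Analysis"
begin

(* Conventions: all indices are 0-based.  Matrices are functions nat => nat => real,
   vectors are functions nat => real; only entries inside the stated dimensions matter. *)

definition smooth_fun :: "(real \<Rightarrow> real) \<Rightarrow> bool" where
  "smooth_fun f \<longleftrightarrow> (\<exists>Df :: nat \<Rightarrow> real \<Rightarrow> real. Df 0 = f \<and>
      (\<forall>j x. (Df j has_real_derivative Df (Suc j) x) (at x)))"

definition hvec :: "nat \<Rightarrow> (nat \<Rightarrow> nat \<Rightarrow> real) \<Rightarrow> real list" where
  "hvec n S = concat (map (\<lambda>i. map (\<lambda>j. S i j) [i..<n]) [0..<n])"

definition normS :: "nat \<Rightarrow> (nat \<Rightarrow> nat \<Rightarrow> real) \<Rightarrow> real" where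
  "normS n S = sqrt (sum_list (map (\<lambda>x. x\<^sup>2) (hvec n S)))"

definition gmat :: "nat \<Rightarrow> (nat \<Rightarrow> real) \<Rightarrow> (nat \<Rightarrow> nat \<Rightarrow> real)" where
  "gmat k v = (\<lambda>i j. v (i * k + j))"

definition net :: "(real \<Rightarrow> real) \<Rightarrow> nat \<Rightarrow> nat \<Rightarrow> (nat \<Rightarrow> nat \<Rightarrow> real) \<Rightarrow> (nat \<Rightarrow> real)
    \<Rightarrow> (nat \<Rightarrow> nat \<Rightarrow> real) \<Rightarrow> (nat \<Rightarrow> real) \<Rightarrow> (nat \<Rightarrow> real) \<Rightarrow> (nat \<Rightarrow> real)" where
  "net \<sigma> r l A b C d x = (\<lambda>p. (\<Sum>q<l. C p q * \<sigma> ((\<Sum>s<r. A q s * x s) + b q)) + d p)"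

definition phi :: "(real \<Rightarrow> real) \<Rightarrow> (real \<Rightarrow> real) \<Rightarrow> nat \<Rightarrow> nat \<Rightarrow> nat \<Rightarrow> (nat \<Rightarrow> nat \<Rightarrow> real)
    \<Rightarrow> (nat \<Rightarrow> nat \<Rightarrow> real) \<Rightarrow> (nat \<Rightarrow> real) \<Rightarrow> (nat \<Rightarrow> nat \<Rightarrow> real) \<Rightarrow> (nat \<Rightarrow> real) \<Rightarrow> real" where
  "phi \<sigma> \<mu> n k l S A b C d =
     (let r = n * (n + 1) div 2;
          M = gmat k (net \<sigma> r l A b C d (\<lambda>s. hvec n S ! s))
      in (\<Sum>i<n. \<Sum>j<n. \<mu> ((\<Sum>t<k. M i t * M j t) - S i j)))"

definition param_norm :: "nat \<Rightarrow> nat \<Rightarrow> nat \<Rightarrow> (nat \<Rightarrow> nat \<Rightarrow> real) \<Rightarrow> (nat \<Rightarrow> real)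
    \<Rightarrow> (nat \<Rightarrow> nat \<Rightarrow> real) \<Rightarrow> (nat \<Rightarrow> real) \<Rightarrow> real" where
  "param_norm n k l A b C d =
     (let r = n * (n + 1) div 2 in
      sqrt ((\<Sum>q<l. \<Sum>s<r. (A q s)\<^sup>2) + (\<Sum>q<l. (b q)\<^sup>2)
          + (\<Sum>p<n*k. \<Sum>q<l. (C p q)\<^sup>2) + (\<Sum>p<n*k. (d p)\<^sup>2)))"

definition grad_b :: "(real \<Rightarrow> real) \<Rightarrow> (real \<Rightarrow> real) \<Rightarrow> nat \<Rightarrow> nat \<Rightarrow> nat \<Rightarrow> (nat \<Rightarrow> nat \<Rightarrow> real)
    \<Rightarrow> (nat \<Rightarrow> nat \<Rightarrow> real) \<Rightarrow> (nat \<Rightarrow> real) \<Rightarrow> (nat \<Rightarrow> nat \<Rightarrow> real) \<Rightarrow> (nat \<Rightarrow> real) \<Rightarrow> (nat \<Rightarrow> real)" where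
  "grad_b \<sigma> \<mu> n k l S A b C d =
     (\<lambda>q. deriv (\<lambda>t. phi \<sigma> \<mu> n k l S A (b(q := b q + t)) C d) 0)"

definition vnorm :: "nat \<Rightarrow> (nat \<Rightarrow> real) \<Rightarrow> real" where
  "vnorm l v = sqrt (\<Sum>q<l. (v q)\<^sup>2)"

end

theory Submission
  imports Defs
begin

definition blk :: "nat \<Rightarrow> (nat \<Rightarrow> real) \<Rightarrow> (nat \<Rightarrow> real) \<Rightarrow> nat \<Rightarrow> nat \<Rightarrow> real" where
  "blk k a c i j = (\<Sum>t<k. a (i*k+t) * c (j*k+t))"

definition nn :: "nat \<Rightarrow> (nat \<Rightarrow> real) \<Rightarrow> real" where
  "nn N a = (\<Sum>p<N. (a p)\<^sup>2)"

definition FF :: "nat \<Rightarrow> nat \<Rightarrow> (nat \<Rightarrow> nat \<Rightarrow> real) \<Rightarrow> (nat \<Rightarrow> real) \<Rightarrow> (nat \<Rightarrow> real) \<Rightarrow> real" where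
  "FF n k w c m = (\<Sum>i<n. \<Sum>j<n. w i j * (blk k c m i j + blk k m c i j))"

definition W2 :: "nat \<Rightarrow> (nat \<Rightarrow> nat \<Rightarrow> real) \<Rightarrow> real" where
  "W2 n w = (\<Sum>i<n. \<Sum>j<n. (w i j)\<^sup>2)"

lemma lip_deriv:
  fixes f :: "real \<Rightarrow> real"
  assumes "\<forall>x. (f has_real_derivative f' x) (at x)" "\<forall>x. \<bar>f' x\<bar> \<le> B"
  shows "\<bar>f a - f b\<bar> \<le> B * \<bar>a - b\<bar>"
proof -
  have main: "\<bar>f v - f u\<bar> \<le> B * \<bar>v - u\<bar>" if uv: "u < v" for u v
  proof -
    obtain z where "f v - f u = (v - u) * f' z" using MVT2[of u v f f'] uv assms(1) by auto
    then have "\<bar>f v - f u\<bar> = \<bar>v - u\<bar> * \<bar>f' z\<bar>" by (simp add: abs_mult)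
    also have "\<dots> \<le> \<bar>v - u\<bar> * B" using assms(2) by (intro mult_left_mono) auto
    finally show ?thesis by (simp add: mult.commute)
  qed
  show ?thesis
  proof (cases "a < b")
    case True then show ?thesis using main[of a b] by (simp add: abs_minus_commute)
  next
    case False then show ?thesis using main[of b a] by (cases "a = b") (auto simp: abs_minus_commute)
  qed
qed

lemma sum_blocks: fixes n k :: nat shows "(\<Sum>i<n. \<Sum>t<k. f (i*k+t)) = (\<Sum>p<n*k. (f p :: real))"
proof (induction n)
  case 0 then show ?case by simp
next
  case (Suc n)
  have "(\<Sum>p<Suc n*k. f p) = (\<Sum>p\<in>{0..<n*k}. f p) + (\<Sum>p\<in>{n*k..<n*k+k}. f p)"
    by (subst sum.atLeastLessThan_concat) (auto simp: lessThan_atLeast0 add.commute)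
  also have "(\<Sum>p\<in>{n*k..<n*k+k}. f p) = (\<Sum>t<k. f (n*k+t))"
    using sum.shift_bounds_nat_ivl[of f 0 "n*k" k] by (simp add: lessThan_atLeast0 add.commute)
  finally show ?case using Suc by (simp add: lessThan_atLeast0)
qed

lemma CS: "(\<Sum>i\<in>I. a i * b i)\<^sup>2 \<le> (\<Sum>i\<in>I. (a i)\<^sup>2) * (\<Sum>i\<in>I. (b i :: real)\<^sup>2)"
  by (rule Cauchy_Schwarz_ineq_sum)

lemma blk_bound: "(\<Sum>i<n. \<Sum>j<n. (blk k a c i j)\<^sup>2) \<le> nn (n*k) a * nn (n*k) c"
proof -
  have "(\<Sum>i<n. \<Sum>j<n. (blk k a c i j)\<^sup>2) \<le> (\<Sum>i<n. \<Sum>j<n. (\<Sum>t<k. (a (i*k+t))\<^sup>2) * (\<Sum>t<k. (c (j*k+t))\<^sup>2))"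
    unfolding blk_def by (intro sum_mono CS)
  also have "\<dots> = (\<Sum>i<n. \<Sum>t<k. (a (i*k+t))\<^sup>2) * (\<Sum>j<n. \<Sum>t<k. (c (j*k+t))\<^sup>2)"
    by (simp add: sum_product)
  also have "\<dots> = nn (n*k) a * nn (n*k) c"
    unfolding nn_def by (simp add: sum_blocks[where f="\<lambda>p. (a p)\<^sup>2"] sum_blocks[where f="\<lambda>p. (c p)\<^sup>2"])
  finally show ?thesis .
qed

lemma wsum_bound: "(\<Sum>i<n. \<Sum>j<n. w i j * g i j)\<^sup>2 \<le> W2 n w * W2 n (g :: nat \<Rightarrow> nat \<Rightarrow> real)"
proof -
  have e: "\<And>h. (\<Sum>i<n. \<Sum>j<n. h i j) = (\<Sum>(i,j)\<in>{..<n}\<times>{..<n}. (h i j :: real))"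
    by (simp add: sum.cartesian_product)
  show ?thesis unfolding W2_def e
    using CS[of "\<lambda>(i,j). w i j" "\<lambda>(i,j). g i j" "{..<n}\<times>{..<n}"]
    by (simp add: case_prod_beta)
qed

lemma sq_add: "(a+b)\<^sup>2 \<le> 2*a\<^sup>2 + 2*(b::real)\<^sup>2"
proof -
  have "(a+b)\<^sup>2 = 2*a\<^sup>2 + 2*b\<^sup>2 - (a-b)\<^sup>2" by (simp add: power2_eq_square algebra_simps)
  then show ?thesis by simp
qed

lemma W2_add: "W2 n (\<lambda>i j. f i j + g i j) \<le> 2 * W2 n f + 2 * W2 n g"
proof -
  have "W2 n (\<lambda>i j. f i j + g i j) \<le> (\<Sum>i<n. \<Sum>j<n. 2 * (f i j)\<^sup>2 + 2 * (g i j)\<^sup>2)"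
    unfolding W2_def by (intro sum_mono sq_add)
  also have "\<dots> = 2 * W2 n f + 2 * W2 n g"
    unfolding W2_def by (simp add: sum.distrib sum_distrib_left)
  finally show ?thesis .
qed

lemma FF_bound: "(FF n k w c m)\<^sup>2 \<le> 4 * W2 n w * nn (n*k) c * nn (n*k) m"
proof -
  have "(FF n k w c m)\<^sup>2 \<le> W2 n w * W2 n (\<lambda>i j. blk k c m i j + blk k m c i j)"
    unfolding FF_def by (rule wsum_bound)
  also have "\<dots> \<le> W2 n w * (2 * W2 n (blk k c m) + 2 * W2 n (blk k m c))"
    by (intro mult_left_mono W2_add) (auto simp: W2_def intro!: sum_nonneg)
  also have "\<dots> \<le> W2 n w * (2 * (nn (n*k) c * nn (n*k) m) + 2 * (nn (n*k) m * nn (n*k) c))"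
    using blk_bound[where n=n and k=k and a=c and c=m] blk_bound[where n=n and k=k and a=m and c=c]
    by (intro mult_left_mono add_mono) (auto simp: W2_def intro!: sum_nonneg)
  finally show ?thesis by (simp add: algebra_simps)
qed

lemma blk_lin1: "blk k (\<lambda>p. a p - a' p) c i j = blk k a c i j - blk k a' c i j"
  unfolding blk_def by (simp add: sum_subtractf[symmetric] algebra_simps)
lemma blk_lin2: "blk k c (\<lambda>p. a p - a' p) i j = blk k c a i j - blk k c a' i j"
  unfolding blk_def by (simp add: sum_subtractf[symmetric] algebra_simps)

lemma FF_diff: "FF n k w c m - FF n k w' c' m' =
   FF n k (\<lambda>i j. w i j - w' i j) c m + FF n k w' (\<lambda>p. c p - c' p) m + FF n k w' c' (\<lambda>p. m p - m' p)"
  unfolding FF_def blk_lin1 blk_lin2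
  apply (simp only: sum_subtractf[symmetric] sum.distrib[symmetric])
  apply (rule sum.cong refl)+
  apply (simp add: algebra_simps)
  done

lemma FF_scale: "FF n k w (\<lambda>p. a * c p) m = a * FF n k w c m"
  unfolding FF_def blk_def
  by (simp add: sum_distrib_left algebra_simps)

lemma net_deriv:
  assumes sd: "\<forall>x. (\<sigma> has_real_derivative \<sigma>1 x) (at x)" and q: "q < l"
  shows "((\<lambda>t. net \<sigma> r l A (b(q := b q + t)) C d x p) has_real_derivative
           (C p q * \<sigma>1 ((\<Sum>s<r. A q s * x s) + b q))) (at 0)"
proof -
  define zq where "zq = (\<Sum>s<r. A q s * x s) + b q"
  have each: "((\<lambda>t. C p q' * \<sigma> ((\<Sum>s<r. A q' s * x s) + (b(q := b q + t)) q')) has_real_derivative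
      (if q' = q then C p q * \<sigma>1 zq else 0)) (at 0)" for q'
  proof (cases "q' = q")
    case True
    have e: "(\<lambda>t. C p q' * \<sigma> ((\<Sum>s<r. A q' s * x s) + (b(q := b q + t)) q')) = (\<lambda>t. C p q * \<sigma> (zq + t))"
      using True by (auto simp: zq_def algebra_simps)
    have d1: "((\<lambda>t. zq + t) has_real_derivative 1) (at 0)"
      by (auto intro!: derivative_eq_intros)
    have d2: "((\<lambda>t. \<sigma> (zq + t)) has_real_derivative \<sigma>1 zq * 1) (at 0)"
      using DERIV_chain2[of \<sigma> "\<sigma>1 zq" "\<lambda>t. zq + t" 0 1 UNIV] sd d1 by simp
    show ?thesis unfolding e using True DERIV_cmult[OF d2, of "C p q"] by simp
  next
    case False
    then show ?thesis by simp
  qed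
  have "((\<lambda>t. (\<Sum>q'<l. C p q' * \<sigma> ((\<Sum>s<r. A q' s * x s) + (b(q := b q + t)) q')) + d p) has_real_derivative
      (\<Sum>q'<l. if q' = q then C p q * \<sigma>1 zq else 0) + 0) (at 0)"
    by (intro DERIV_add DERIV_sum each DERIV_const)
  then show ?thesis using q unfolding net_def zq_def by simp
qed

lemma phi_deriv:
  fixes N :: "real \<Rightarrow> nat \<Rightarrow> real"
  assumes nd: "\<And>p. ((\<lambda>t. N t p) has_real_derivative N' p) (at 0)"
    and md: "\<forall>x. (\<mu> has_real_derivative \<mu>1 x) (at x)"
  shows "((\<lambda>t. \<Sum>i<n. \<Sum>j<n. \<mu> ((\<Sum>u<k. N t (i*k+u) * N t (j*k+u)) - S i j)) has_real_derivative
     (\<Sum>i<n. \<Sum>j<n. \<mu>1 ((\<Sum>u<k. N 0 (i*k+u) * N 0 (j*k+u)) - S i j) *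
        (\<Sum>u<k. N 0 (i*k+u) * N' (j*k+u) + N' (i*k+u) * N 0 (j*k+u)))) (at 0)"
proof -
  have inner: "((\<lambda>t. (\<Sum>u<k. N t (i*k+u) * N t (j*k+u)) - S i j) has_real_derivative
        (\<Sum>u<k. N 0 (i*k+u) * N' (j*k+u) + N' (i*k+u) * N 0 (j*k+u)) - 0) (at 0)" for i j
    by (intro DERIV_diff DERIV_sum DERIV_mult' nd DERIV_const)
  show ?thesis
    apply (intro DERIV_sum)
    using DERIV_chain2[OF _ inner] md by simp
qed

lemma grad_formula:
  fixes n k l :: nat and S :: "nat \<Rightarrow> nat \<Rightarrow> real" and A C :: "nat \<Rightarrow> nat \<Rightarrow> real" and b d :: "nat \<Rightarrow> real"
  assumes sd: "\<forall>x. (\<sigma> has_real_derivative \<sigma>1 x) (at x)"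
    and md: "\<forall>x. (\<mu> has_real_derivative \<mu>1 x) (at x)" and q: "q < l"
  defines "r \<equiv> n * (n + 1) div 2"
  defines "x \<equiv> (\<lambda>s. hvec n S ! s)"
  defines "y \<equiv> net \<sigma> r l A b C d x"
  shows "grad_b \<sigma> \<mu> n k l S A b C d q =
     \<sigma>1 ((\<Sum>s<r. A q s * x s) + b q) *
     FF n k (\<lambda>i j. \<mu>1 ((\<Sum>u<k. y (i*k+u) * y (j*k+u)) - S i j)) (\<lambda>p. C p q) y"
proof -
  define N where "N = (\<lambda>t. net \<sigma> r l A (b(q := b q + t)) C d x)"
  define z where "z = (\<Sum>s<r. A q s * x s) + b q"
  have N0: "N 0 = y" unfolding N_def y_def by simp
  have nd: "\<And>p. ((\<lambda>t. N t p) has_real_derivative (\<lambda>p. \<sigma>1 z * C p q) p) (at 0)"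
    unfolding N_def z_def using net_deriv[OF sd q] by (simp add: mult.commute)
  have ph: "(\<lambda>t. phi \<sigma> \<mu> n k l S A (b(q := b q + t)) C d) =
      (\<lambda>t. \<Sum>i<n. \<Sum>j<n. \<mu> ((\<Sum>u<k. N t (i*k+u) * N t (j*k+u)) - S i j))"
    unfolding phi_def N_def Let_def gmat_def r_def x_def by simp
  have "grad_b \<sigma> \<mu> n k l S A b C d q =
     (\<Sum>i<n. \<Sum>j<n. \<mu>1 ((\<Sum>u<k. N 0 (i*k+u) * N 0 (j*k+u)) - S i j) *
        (\<Sum>u<k. N 0 (i*k+u) * (\<sigma>1 z * C (j*k+u) q) + \<sigma>1 z * C (i*k+u) q * N 0 (j*k+u)))"
    unfolding grad_b_def ph
    by (rule DERIV_imp_deriv[OF phi_deriv[OF nd md]])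
  also have "\<dots> = \<sigma>1 z * FF n k (\<lambda>i j. \<mu>1 ((\<Sum>u<k. y (i*k+u) * y (j*k+u)) - S i j)) (\<lambda>p. C p q) y"
    unfolding FF_def blk_def N0 sum_distrib_left
    apply (intro sum.cong refl)
    apply (simp add: sum.distrib sum_distrib_left sum_distrib_right algebra_simps)
    done
  finally show ?thesis unfolding z_def .
qed

lemma sq_add3: "(a+b+c)\<^sup>2 \<le> 3*a\<^sup>2 + 3*b\<^sup>2 + 3*(c::real)\<^sup>2"
proof -
  have "(a+b+c)\<^sup>2 = 3*a\<^sup>2 + 3*b\<^sup>2 + 3*c\<^sup>2 - (a-b)\<^sup>2 - (b-c)\<^sup>2 - (a-c)\<^sup>2"
    by (simp add: power2_eq_square algebra_simps)
  then show ?thesis by (smt (verit) zero_le_power2)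
qed

lemma sq_add4: "(a+b+c+e)\<^sup>2 \<le> 4*a\<^sup>2 + 4*b\<^sup>2 + 4*c\<^sup>2 + 4*(e::real)\<^sup>2"
proof -
  have "(a+b+c+e)\<^sup>2 = 4*a\<^sup>2 + 4*b\<^sup>2 + 4*c\<^sup>2 + 4*e\<^sup>2 - (a-b)\<^sup>2 - (a-c)\<^sup>2 - (a-e)\<^sup>2 - (b-c)\<^sup>2 - (b-e)\<^sup>2 - (c-e)\<^sup>2"
    by (simp add: power2_eq_square algebra_simps)
  then show ?thesis by (smt (verit) zero_le_power2)
qed

lemma y_bound:
  assumes u: "\<And>q. q < l \<Longrightarrow> \<bar>u q\<bar> \<le> 1"
  shows "(\<Sum>p<N. ((\<Sum>q<l. C p q * u q) + d p)\<^sup>2) \<le> 2 * real l * (\<Sum>p<N. \<Sum>q<l. (C p q)\<^sup>2) + 2 * (\<Sum>p<N. (d p)\<^sup>2)"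
proof -
  have uu: "(\<Sum>q<l. (u q)\<^sup>2) \<le> real l"
  proof -
    have "(\<Sum>q<l. (u q)\<^sup>2) \<le> (\<Sum>q<l. (1::real))"
      using u by (intro sum_mono) (simp add: abs_le_square_iff[symmetric] abs_square_le_1)
    then show ?thesis by simp
  qed
  have "(\<Sum>p<N. ((\<Sum>q<l. C p q * u q) + d p)\<^sup>2) \<le> (\<Sum>p<N. 2 * (\<Sum>q<l. C p q * u q)\<^sup>2 + 2 * (d p)\<^sup>2)"
    by (intro sum_mono sq_add)
  also have "\<dots> \<le> (\<Sum>p<N. 2 * ((\<Sum>q<l. (C p q)\<^sup>2) * real l) + 2 * (d p)\<^sup>2)"
  proof (intro sum_mono add_mono mult_left_mono order_refl)
    fix p
    show "(\<Sum>q<l. C p q * u q)\<^sup>2 \<le> (\<Sum>q<l. (C p q)\<^sup>2) * real l"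
      using uu order_trans CS[of "C p" u "{..<l}"]
      by (meson mult_left_mono sum_nonneg zero_le_power2)
  qed simp_all
  also have "\<dots> = 2 * real l * (\<Sum>p<N. \<Sum>q<l. (C p q)\<^sup>2) + 2 * (\<Sum>p<N. (d p)\<^sup>2)"
    by (simp add: sum.distrib sum_distrib_left sum_distrib_right algebra_simps)
  finally show ?thesis .
qed

lemma sum3_lin: "(\<Sum>p<N. 3 * (e p * L) + 3 * (c p * U) + 3 * f p) = 3 * L * (\<Sum>p<N. e p) + 3 * (\<Sum>p<N. c p) * U + 3 * (\<Sum>p<N. (f p::real))"
  by (simp add: sum.distrib sum_distrib_left sum_distrib_right algebra_simps)

lemma dy_bound:
  assumes u: "\<And>q. q < l \<Longrightarrow> \<bar>u q\<bar> \<le> 1"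
  shows "(\<Sum>p<N. (((\<Sum>q<l. C p q * u q) + d p) - ((\<Sum>q<l. C' p q * u' q) + d' p))\<^sup>2)
    \<le> 3 * real l * (\<Sum>p<N. \<Sum>q<l. (C p q - C' p q)\<^sup>2)
      + 3 * (\<Sum>p<N. \<Sum>q<l. (C' p q)\<^sup>2) * (\<Sum>q<l. (u q - u' q)\<^sup>2)
      + 3 * (\<Sum>p<N. (d p - d' p)\<^sup>2)"
proof -
  have uu: "(\<Sum>q<l. (u q)\<^sup>2) \<le> real l"
  proof -
    have "(\<Sum>q<l. (u q)\<^sup>2) \<le> (\<Sum>q<l. (1::real))"
      using u by (intro sum_mono) (simp add: abs_le_square_iff[symmetric] abs_square_le_1)
    then show ?thesis by simp
  qed
  have eq: "((\<Sum>q<l. C p q * u q) + d p) - ((\<Sum>q<l. C' p q * u' q) + d' p)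
      = (\<Sum>q<l. (C p q - C' p q) * u q) + (\<Sum>q<l. C' p q * (u q - u' q)) + (d p - d' p)" for p
    by (simp add: sum_subtractf[symmetric] sum.distrib[symmetric] algebra_simps)
  have "(\<Sum>p<N. (((\<Sum>q<l. C p q * u q) + d p) - ((\<Sum>q<l. C' p q * u' q) + d' p))\<^sup>2)
     \<le> (\<Sum>p<N. 3 * (\<Sum>q<l. (C p q - C' p q) * u q)\<^sup>2 + 3 * (\<Sum>q<l. C' p q * (u q - u' q))\<^sup>2 + 3 * (d p - d' p)\<^sup>2)"
    unfolding eq by (intro sum_mono sq_add3)
  also have "\<dots> \<le> (\<Sum>p<N. 3 * ((\<Sum>q<l. (C p q - C' p q)\<^sup>2) * real l)
        + 3 * ((\<Sum>q<l. (C' p q)\<^sup>2) * (\<Sum>q<l. (u q - u' q)\<^sup>2)) + 3 * (d p - d' p)\<^sup>2)"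
  proof (intro sum_mono add_mono mult_left_mono order_refl)
    fix p
    show "(\<Sum>q<l. (C p q - C' p q) * u q)\<^sup>2 \<le> (\<Sum>q<l. (C p q - C' p q)\<^sup>2) * real l"
      using uu order_trans CS[of "\<lambda>q. C p q - C' p q" u "{..<l}"]
      by (meson mult_left_mono sum_nonneg zero_le_power2)
    show "(\<Sum>q<l. C' p q * (u q - u' q))\<^sup>2 \<le> (\<Sum>q<l. (C' p q)\<^sup>2) * (\<Sum>q<l. (u q - u' q)\<^sup>2)"
      by (rule CS)
  qed simp_all
  also have "\<dots> = 3 * real l * (\<Sum>p<N. \<Sum>q<l. (C p q - C' p q)\<^sup>2)
      + 3 * (\<Sum>p<N. \<Sum>q<l. (C' p q)\<^sup>2) * (\<Sum>q<l. (u q - u' q)\<^sup>2)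
      + 3 * (\<Sum>p<N. (d p - d' p)\<^sup>2)"
    by (rule sum3_lin)
  finally show ?thesis .
qed

lemma dz_bound: fixes r :: nat shows
  "((\<Sum>s<r. a s * x s) + \<beta>)\<^sup>2 \<le> (1 + (\<Sum>s<r. (x s)\<^sup>2)) * ((\<Sum>s<r. (a s)\<^sup>2) + (\<beta>::real)\<^sup>2)"
proof -
  define a' where "a' = (\<lambda>s. if s < r then a s else \<beta>)"
  define x' where "x' = (\<lambda>s. if s < r then x s else (1::real))"
  have "(\<Sum>s<Suc r. a' s * x' s) = (\<Sum>s<r. a s * x s) + \<beta>"
    by (simp add: a'_def x'_def)
  moreover have "(\<Sum>s<Suc r. (a' s)\<^sup>2) = (\<Sum>s<r. (a s)\<^sup>2) + \<beta>\<^sup>2"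
    by (simp add: a'_def)
  moreover have "(\<Sum>s<Suc r. (x' s)\<^sup>2) = 1 + (\<Sum>s<r. (x s)\<^sup>2)"
    by (simp add: x'_def)
  ultimately show ?thesis using CS[of a' x' "{..<Suc r}"] by (simp add: mult.commute)
qed

lemma pw: "x^6 = x*x*x*x*x*(x::real)" "x^4 = x*x*x*x" "x^3 = x*x*x" "x\<^sup>2 = x*x"
  by (simp_all add: eval_nat_numeral)

lemma final_arith:
  fixes n l D LZ2 P s1 s2 m2 Mx Y Y' dY T :: real
  assumes n1: "1 \<le> n" and l1: "1 \<le> l" and D0: "0 < D" and LZ1: "1 \<le> LZ2" and P0: "0 \<le> P"
    and s10: "0 \<le> s1" and s20: "0 \<le> s2" and m20: "0 \<le> m2"
    and M1: "l*D\<^sup>2*LZ2 \<le> Mx" and M2: "l\<^sup>2*D^6*LZ2 \<le> Mx" and M3: "l^3*D^4 \<le> Mx" and M4: "n*l \<le> Mx"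
    and Y0: "0 \<le> Y" and Yb: "Y \<le> 4*l*D\<^sup>2" and Y'0: "0 \<le> Y'" and Y'b: "Y' \<le> 4*l*D\<^sup>2"
    and dY0: "0 \<le> dY" and dYb: "dY \<le> 3*(l + D\<^sup>2* s1\<^sup>2*LZ2 + 1)*P"
    and T: "T \<le> 4*(s2\<^sup>2 * (4*n\<^sup>2*D\<^sup>2*Y) * (LZ2*P) + s1\<^sup>2*(4*m2\<^sup>2*(2*dY*Y + 2*Y'*dY)*Y*D\<^sup>2)
                 + s1\<^sup>2*(4*n\<^sup>2*P*Y) + s1\<^sup>2*(4*n\<^sup>2*D\<^sup>2*dY))"
  shows "T \<le> 10000*(1+s1)^4*(1+s2)^2*(1+m2)^2 * n\<^sup>2 * D\<^sup>2 * Mx * P"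
proof -
  define Q where "Q = n\<^sup>2*D\<^sup>2*Mx"
  have D2: "0 < D\<^sup>2" using D0 by simp
  have n2: "1 \<le> n\<^sup>2" using n1 by (simp add: one_le_power)
  have "1*1 \<le> n*l" using n1 l1 by (intro mult_mono) auto
  then have Mx1: "1 \<le> Mx" using M4 by linarith
  have Q0: "0 \<le> Q" unfolding Q_def using Mx1 by simp
  have DQ: "D\<^sup>2 * Mx \<le> Q" unfolding Q_def using n2 D2 Mx1
    by (metis mult_le_cancel_right1 mult.commute mult.left_commute order_less_le zero_le_one order_trans mult_right_mono less_le_not_le)
  have "Y*LZ2 \<le> 4*l*D\<^sup>2*LZ2" using Yb LZ1 by (intro mult_right_mono) auto
  also have "\<dots> \<le> 4*Mx" using M1 by linarith
  finally have YL: "Y*LZ2 \<le> 4*Mx" .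
  have t1: "s2\<^sup>2 * (4*n\<^sup>2*D\<^sup>2*Y) * (LZ2*P) \<le> 16* s2\<^sup>2*Q*P"
  proof -
    have "s2\<^sup>2 * (4*n\<^sup>2*D\<^sup>2*Y) * (LZ2*P) = (4* s2\<^sup>2*n\<^sup>2*D\<^sup>2*P) * (Y*LZ2)" by (simp add: algebra_simps)
    also have "\<dots> \<le> (4* s2\<^sup>2*n\<^sup>2*D\<^sup>2*P) * (4*Mx)" using YL P0 by (intro mult_left_mono) auto
    finally show ?thesis unfolding Q_def by (simp add: algebra_simps)
  qed
  have "(2*dY*Y + 2*Y'*dY) \<le> 16*l*D\<^sup>2*dY"
  proof -
    have "2*dY*Y \<le> 2*dY*(4*l*D\<^sup>2)" using Yb dY0 by (intro mult_left_mono) auto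
    moreover have "2*Y'*dY \<le> 2*(4*l*D\<^sup>2)*dY" using Y'b dY0 by (intro mult_right_mono) auto
    ultimately show ?thesis by (simp add: algebra_simps)
  qed
  then have "4*m2\<^sup>2*(2*dY*Y + 2*Y'*dY)*Y*D\<^sup>2 \<le> 4*m2\<^sup>2*(16*l*D\<^sup>2*dY)*(4*l*D\<^sup>2)*D\<^sup>2"
    using Y0 Yb dY0 D2 Y'0 l1 by (intro mult_mono mult_left_mono) (auto intro!: add_nonneg_nonneg mult_nonneg_nonneg)
  also have "\<dots> = 256*m2\<^sup>2*(l\<^sup>2*D^6)*dY" by (simp add: algebra_simps pw)
  also have "\<dots> \<le> 256*m2\<^sup>2*(l\<^sup>2*D^6)*(3*(l + D\<^sup>2* s1\<^sup>2*LZ2 + 1)*P)"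
    using dYb by (intro mult_left_mono) auto
  also have "\<dots> = 768*m2\<^sup>2*P*(D\<^sup>2*(l^3*D^4) + s1\<^sup>2*D\<^sup>2*(l\<^sup>2*D^6*LZ2) + D\<^sup>2*(l\<^sup>2*D^4))"
    by (simp add: algebra_simps pw)
  also have "\<dots> \<le> 768*m2\<^sup>2*P*(D\<^sup>2*Mx + s1\<^sup>2*D\<^sup>2*Mx + D\<^sup>2*Mx)"
  proof -
    have "l\<^sup>2*D^4 \<le> l^3*D^4" using l1 by (intro mult_right_mono) (auto simp: power2_eq_square power3_eq_cube)
    then have "l\<^sup>2*D^4 \<le> Mx" using M3 by linarith
    then have "D\<^sup>2*(l\<^sup>2*D^4) \<le> D\<^sup>2*Mx" using D2 by (intro mult_left_mono) auto
    moreover have "D\<^sup>2*(l^3*D^4) \<le> D\<^sup>2*Mx" using M3 D2 by (intro mult_left_mono) auto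
    moreover have "s1\<^sup>2*D\<^sup>2*(l\<^sup>2*D^6*LZ2) \<le> s1\<^sup>2*D\<^sup>2*Mx" using M2 D2 by (intro mult_left_mono) auto
    ultimately have "D\<^sup>2*(l^3*D^4) + s1\<^sup>2*D\<^sup>2*(l\<^sup>2*D^6*LZ2) + D\<^sup>2*(l\<^sup>2*D^4) \<le> D\<^sup>2*Mx + s1\<^sup>2*D\<^sup>2*Mx + D\<^sup>2*Mx" by linarith
    then show ?thesis using m20 P0 by (intro mult_left_mono) auto
  qed
  also have "\<dots> = 768*m2\<^sup>2*P*(2 + s1\<^sup>2)*(D\<^sup>2*Mx)" by (simp add: algebra_simps)
  also have "\<dots> \<le> 768*m2\<^sup>2*P*(2 + s1\<^sup>2)*Q" using DQ P0 by (intro mult_left_mono) auto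
  finally have t2: "4*m2\<^sup>2*(2*dY*Y + 2*Y'*dY)*Y*D\<^sup>2 \<le> 768*m2\<^sup>2*(2 + s1\<^sup>2)*Q*P" by (simp add: algebra_simps)
  have "4*n\<^sup>2*P*Y \<le> 4*n\<^sup>2*P*(4*l*D\<^sup>2)" using Yb P0 by (intro mult_left_mono) auto
  also have "\<dots> = 16*P*(n\<^sup>2*D\<^sup>2*l)" by (simp add: algebra_simps)
  also have "\<dots> \<le> 16*P*Q"
  proof -
    have "1*l \<le> n*l" using n1 l1 by (intro mult_right_mono) auto
    then have "l \<le> Mx" using M4 by linarith
    then have "n\<^sup>2*D\<^sup>2*l \<le> Q" unfolding Q_def using D2 by (intro mult_left_mono) auto
    then show ?thesis using P0 by (intro mult_left_mono) auto
  qed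
  finally have t3: "4*n\<^sup>2*P*Y \<le> 16*Q*P" by (simp add: algebra_simps)
  have "4*n\<^sup>2*D\<^sup>2*dY \<le> 4*n\<^sup>2*D\<^sup>2*(3*(l + D\<^sup>2* s1\<^sup>2*LZ2 + 1)*P)" using dYb D2 by (intro mult_left_mono) auto
  also have "\<dots> = 12*P*(n\<^sup>2*D\<^sup>2*l + s1\<^sup>2*(n\<^sup>2*D\<^sup>2*(D\<^sup>2*LZ2)) + n\<^sup>2*D\<^sup>2)" by (simp add: algebra_simps)
  also have "\<dots> \<le> 12*P*(Q + s1\<^sup>2*Q + Q)"
  proof -
    have "1*l \<le> n*l" using n1 l1 by (intro mult_right_mono) auto
    then have lM: "l \<le> Mx" using M4 by linarith
    have a: "n\<^sup>2*D\<^sup>2*l \<le> Q" unfolding Q_def using lM D2 by (intro mult_left_mono) auto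
    have "D\<^sup>2*LZ2 \<le> l*D\<^sup>2*LZ2" using l1 D2 LZ1 by (simp add: mult_right_mono)
    then have "D\<^sup>2*LZ2 \<le> Mx" using M1 by linarith
    then have b: "n\<^sup>2*D\<^sup>2*(D\<^sup>2*LZ2) \<le> Q" unfolding Q_def using D2 by (intro mult_left_mono) auto
    have c: "n\<^sup>2*D\<^sup>2*1 \<le> Q" unfolding Q_def using Mx1 D2 by (intro mult_left_mono) auto
    show ?thesis using a b c P0 by (intro mult_left_mono add_mono) auto
  qed
  finally have t4: "4*n\<^sup>2*D\<^sup>2*dY \<le> 12*(2 + s1\<^sup>2)*Q*P" by (simp add: algebra_simps)
  have S1: "s1\<^sup>2*(4*m2\<^sup>2*(2*dY*Y + 2*Y'*dY)*Y*D\<^sup>2) \<le> s1\<^sup>2*(768*m2\<^sup>2*(2 + s1\<^sup>2)*Q*P)"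
    using t2 by (intro mult_left_mono) auto
  have S3: "s1\<^sup>2*(4*n\<^sup>2*P*Y) \<le> s1\<^sup>2*(16*Q*P)" using t3 by (intro mult_left_mono) auto
  have S4: "s1\<^sup>2*(4*n\<^sup>2*D\<^sup>2*dY) \<le> s1\<^sup>2*(12*(2 + s1\<^sup>2)*Q*P)" using t4 by (intro mult_left_mono) auto
  have T2: "T \<le> (64* s2\<^sup>2 + 6144*(s1\<^sup>2*m2\<^sup>2) + 3072*(s1\<^sup>2* s1\<^sup>2*m2\<^sup>2) + 64* s1\<^sup>2 + 96* s1\<^sup>2 + 48*(s1\<^sup>2* s1\<^sup>2)) * (Q*P)"
    using T t1 S1 S3 S4 by (simp add: algebra_simps)
  define R where "R = (1+s1)^4*(1+s2)^2*(1+m2)^2"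
  have a1: "1 \<le> (1+s1)^4" "1 \<le> (1+s2)^2" "1 \<le> (1+m2)^2" using s10 s20 m20 by (auto simp: one_le_power)
  have b1: "s1\<^sup>2 \<le> (1+s1)^4" "s1\<^sup>2* s1\<^sup>2 \<le> (1+s1)^4" "s2\<^sup>2 \<le> (1+s2)^2" "m2\<^sup>2 \<le> (1+m2)^2"
  proof -
    have "s1 \<le> 1+s1" by simp
    then have e: "s1\<^sup>2 \<le> (1+s1)\<^sup>2" using s10 by (intro power_mono) auto
    have o: "1 \<le> (1+s1)\<^sup>2" using s10 by (simp add: one_le_power)
    have "(1+s1)\<^sup>2*1 \<le> (1+s1)\<^sup>2*(1+s1)\<^sup>2" using o by (intro mult_left_mono) auto
    then have "(1+s1)\<^sup>2 \<le> (1+s1)\<^sup>2*(1+s1)\<^sup>2" by simp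
    then have f: "(1+s1)\<^sup>2*(1+s1)\<^sup>2 = (1+s1)^4" by (simp add: power2_eq_square power4_eq_xxxx)
    show "s1\<^sup>2 \<le> (1+s1)^4" using e \<open>(1+s1)\<^sup>2 \<le> (1+s1)\<^sup>2*(1+s1)\<^sup>2\<close> f by linarith
    show "s1\<^sup>2* s1\<^sup>2 \<le> (1+s1)^4" using e f s10 by (metis mult_mono zero_le_power2)
    show "s2\<^sup>2 \<le> (1+s2)^2" using s20 by (intro power_mono) auto
    show "m2\<^sup>2 \<le> (1+m2)^2" using m20 by (intro power_mono) auto
  qed
  have R1: "s2\<^sup>2 \<le> R" "s1\<^sup>2 \<le> R" "s1\<^sup>2* s1\<^sup>2 \<le> R" "s1\<^sup>2*m2\<^sup>2 \<le> R" "s1\<^sup>2* s1\<^sup>2*m2\<^sup>2 \<le> R"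
  proof -
    have P3: "\<And>a b c A B Cc::real. 0 \<le> a \<Longrightarrow> 0 \<le> b \<Longrightarrow> 0 \<le> c \<Longrightarrow> a \<le> A \<Longrightarrow> b \<le> B \<Longrightarrow> c \<le> Cc \<Longrightarrow> a*b*c \<le> A*B*Cc"
      by (meson mult_mono mult_nonneg_nonneg order_trans)
    show "s2\<^sup>2 \<le> R" unfolding R_def using P3[of 1 "s2\<^sup>2" 1 "(1+s1)^4" "(1+s2)^2" "(1+m2)^2"] a1 b1 by simp
    show "s1\<^sup>2 \<le> R" unfolding R_def using P3[of "s1\<^sup>2" 1 1 "(1+s1)^4" "(1+s2)^2" "(1+m2)^2"] a1 b1 by simp
    show "s1\<^sup>2* s1\<^sup>2 \<le> R" unfolding R_def using P3[of "s1\<^sup>2* s1\<^sup>2" 1 1 "(1+s1)^4" "(1+s2)^2" "(1+m2)^2"] a1 b1 by simp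
    show "s1\<^sup>2*m2\<^sup>2 \<le> R" unfolding R_def using P3[of "s1\<^sup>2" 1 "m2\<^sup>2" "(1+s1)^4" "(1+s2)^2" "(1+m2)^2"] a1 b1 by simp
    show "s1\<^sup>2* s1\<^sup>2*m2\<^sup>2 \<le> R" unfolding R_def using P3[of "s1\<^sup>2* s1\<^sup>2" 1 "m2\<^sup>2" "(1+s1)^4" "(1+s2)^2" "(1+m2)^2"] a1 b1 by simp
  qed
  have K: "64* s2\<^sup>2 + 6144*(s1\<^sup>2*m2\<^sup>2) + 3072*(s1\<^sup>2* s1\<^sup>2*m2\<^sup>2) + 64* s1\<^sup>2 + 96* s1\<^sup>2 + 48*(s1\<^sup>2* s1\<^sup>2) \<le> 10000*R"
    using R1 zero_le_power2[of s2] by linarith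
  have QP: "0 \<le> Q*P" using Q0 P0 by simp
  have "T \<le> 10000*R*(Q*P)" using T2 mult_right_mono[OF K QP] by linarith
  then show ?thesis unfolding R_def Q_def by (simp add: algebra_simps)
qed

lemma binsum: assumes "m \<le> N" shows "(\<Sum>i\<le>N. real (m choose i) * x^i) = (1+x)^m"
proof -
  have "(1+x)^m = (x+1)^m" by (simp add: add.commute)
  also have "\<dots> = (\<Sum>i\<le>m. real (m choose i) * x^i)"
    by (subst binomial_ring) simp
  also have "\<dots> = (\<Sum>i\<le>N. real (m choose i) * x^i)"
    using assms by (intro sum.mono_neutral_left) auto
  finally show ?thesis by simp
qed

lemma triple: "(\<Sum>i\<in>I. f i) * (\<Sum>j\<in>J. g j) * (\<Sum>p\<in>K. h p) = (\<Sum>i\<in>I. \<Sum>j\<in>J. \<Sum>p\<in>K. f i * g j * (h p::real))"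
proof -
  have 1: "(\<Sum>i\<in>I. f i) * (\<Sum>j\<in>J. g j) = (\<Sum>i\<in>I. \<Sum>j\<in>J. f i * g j)" by (rule sum_product)
  have 2: "(\<Sum>i\<in>I. \<Sum>j\<in>J. f i * g j) * (\<Sum>p\<in>K. h p) = (\<Sum>i\<in>I. (\<Sum>j\<in>J. f i * g j) * (\<Sum>p\<in>K. h p))"
    by (rule sum_distrib_right)
  have 3: "\<And>i. (\<Sum>j\<in>J. f i * g j) * (\<Sum>p\<in>K. h p) = (\<Sum>j\<in>J. \<Sum>p\<in>K. f i * g j * h p)"
    by (rule sum_product)
  show ?thesis unfolding 1 2 3 ..
qed

lemma poly_wit: "\<exists>(a :: nat \<Rightarrow> nat \<Rightarrow> nat \<Rightarrow> real) (N :: nat). \<forall>s1 s2 m2::real.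
   (\<Sum>i\<le>N. \<Sum>j\<le>N. \<Sum>p\<le>N. a i j p * s1 ^ i * s2 ^ j * m2 ^ p) = 10000*(1+s1)^4*(1+s2)^2*(1+m2)^2"
proof (intro exI allI)
  fix s1 s2 m2 :: real
  let ?a = "\<lambda>i j p. 10000 * real (4 choose i) * real (2 choose j) * real (2 choose p)"
  have "10000*(1+s1)^4*(1+s2)^2*(1+m2)^2 =
     10000*(\<Sum>i\<le>4. real (4 choose i) * s1^i) * (\<Sum>j\<le>4. real (2 choose j) * s2^j) * (\<Sum>p\<le>4. real (2 choose p) * m2^p)"
    by (simp add: binsum)
  also have "\<dots> = (\<Sum>i\<le>4. \<Sum>j\<le>4. \<Sum>p\<le>4. ?a i j p * s1 ^ i * s2 ^ j * m2 ^ p)"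
  proof -
    have e: "\<And>a b c::real. 10000*a*b*c = 10000*(a*b*c)" by simp
    show ?thesis
      unfolding e
      unfolding triple
      unfolding sum_distrib_left
      by (intro sum.cong refl) (simp add: algebra_simps)
  qed
  finally show "(\<Sum>i\<le>4. \<Sum>j\<le>4. \<Sum>p\<le>4. ?a i j p * s1 ^ i * s2 ^ j * m2 ^ p) = 10000*(1+s1)^4*(1+s2)^2*(1+m2)^2"
    by simp
qed

lemma sum_rev_nat: "2 * (\<Sum>i<n. n - i) = n * (n + 1::nat)"
proof (induction n)
  case 0 then show ?case by simp
next
  case (Suc n)
  have "(\<Sum>i<Suc n. Suc n - i) = (\<Sum>i<n. Suc n - i) + 1" by simp
  also have "(\<Sum>i<n. Suc n - i) = (\<Sum>i<n. (n - i) + 1)" by (intro sum.cong) auto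
  also have "\<dots> = (\<Sum>i<n. n - i) + (\<Sum>i<n. 1)" by (rule sum.distrib)
  finally show ?case using Suc by simp
qed

lemma hvec_len: "length (hvec n S) = n * (n + 1) div 2"
proof -
  have "length (hvec n S) = sum_list (map (\<lambda>i. n - i) [0..<n])"
    unfolding hvec_def length_concat by (simp add: o_def)
  also have "\<dots> = (\<Sum>i<n. n - i)"
    by (simp add: sum_set_upt_conv_sum_list_nat[symmetric] lessThan_atLeast0)
  finally show ?thesis using sum_rev_nat[of n] by simp
qed

lemma normS_sq: "(normS n S)\<^sup>2 = (\<Sum>s<n * (n + 1) div 2. (hvec n S ! s)\<^sup>2)"
proof -
  have "sum_list (map (\<lambda>x. x\<^sup>2) (hvec n S)) = (\<Sum>s<length (hvec n S). (hvec n S ! s)\<^sup>2)"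
    by (simp add: sum_list_sum_nth lessThan_atLeast0)
  moreover have "0 \<le> sum_list (map (\<lambda>x. x\<^sup>2) (hvec n S))" by (auto intro!: sum_list_nonneg)
  ultimately show ?thesis unfolding normS_def by (simp add: hvec_len)
qed

lemma sq_from_abs: assumes "\<bar>u\<bar> \<le> c * \<bar>v\<bar>" "0 \<le> c" shows "u\<^sup>2 \<le> c\<^sup>2 * (v::real)\<^sup>2"
proof -
  have "\<bar>u\<bar>\<^sup>2 \<le> (c * \<bar>v\<bar>)\<^sup>2" using assms by (intro power_mono) auto
  then show ?thesis by (simp add: power_mult_distrib)
qed

lemma sum4_lin: "(\<Sum>q\<in>I. \<alpha> * e q + \<beta> * f q + \<gamma> * g q + \<delta> * h q) =
   \<alpha> * (\<Sum>q\<in>I. e q) + \<beta> * (\<Sum>q\<in>I. f q) + \<gamma> * (\<Sum>q\<in>I. g q) + \<delta> * (\<Sum>q\<in>I. (h q::real))"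
  by (simp add: sum.distrib sum_distrib_left)

lemma sqrt_le_sq: assumes "sqrt a \<le> D" "0 \<le> a" shows "a \<le> D\<^sup>2"
proof -
  have "(sqrt a)\<^sup>2 \<le> D\<^sup>2" using assms by (intro power_mono) auto
  then show ?thesis using assms by simp
qed

lemma W2_le: assumes "\<And>i j. \<bar>w i j\<bar> \<le> 1" shows "W2 n w \<le> (real n)\<^sup>2"
proof -
  have "W2 n w \<le> (\<Sum>i<n. \<Sum>j<n. (1::real))"
    unfolding W2_def using assms by (intro sum_mono) (simp add: abs_le_square_iff[symmetric] abs_square_le_1)
  then show ?thesis by (simp add: power2_eq_square)
qed

lemma E_diff: "(\<Sum>u<k. y (i*k+u) * y (j*k+u)) - S i j - ((\<Sum>u<k. y' (i*k+u) * y' (j*k+u)) - S i j)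
   = blk k (\<lambda>p. y p - y' p) y i j + blk k y' (\<lambda>p. y p - y' p) i j"
  unfolding blk_def by (simp add: sum_subtractf[symmetric] sum.distrib[symmetric] algebra_simps)

lemma main_est:
  fixes \<sigma> \<sigma>1 \<sigma>2 \<mu> \<mu>1 \<mu>2 :: "real \<Rightarrow> real" and s1 s2 m2 D Mx :: real and n k l :: nat
    and S A C A' C' :: "nat \<Rightarrow> nat \<Rightarrow> real" and b d b' d' :: "nat \<Rightarrow> real"
  assumes sd: "\<forall>x. (\<sigma> has_real_derivative \<sigma>1 x) (at x)"
    and s1d: "\<forall>x. (\<sigma>1 has_real_derivative \<sigma>2 x) (at x)"
    and sb: "\<forall>x. \<bar>\<sigma> x\<bar> \<le> 1" and s1b: "\<forall>x. \<bar>\<sigma>1 x\<bar> \<le> s1" and s2b: "\<forall>x. \<bar>\<sigma>2 x\<bar> \<le> s2"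
    and md: "\<forall>x. (\<mu> has_real_derivative \<mu>1 x) (at x)"
    and m1d: "\<forall>x. (\<mu>1 has_real_derivative \<mu>2 x) (at x)"
    and m1b: "\<forall>x. \<bar>\<mu>1 x\<bar> \<le> 1" and m2b: "\<forall>x. \<bar>\<mu>2 x\<bar> \<le> m2"
    and n1: "1 \<le> n" and l1: "1 \<le> l" and D0: "0 < D"
    and pn: "param_norm n k l A b C d \<le> D" and pn': "param_norm n k l A' b' C' d' \<le> D"
  defines "r \<equiv> n * (n + 1) div 2"
  defines "x \<equiv> (\<lambda>s. hvec n S ! s)"
  defines "LZ2 \<equiv> 1 + (\<Sum>s<r. (x s)\<^sup>2)"
  defines "P \<equiv> (\<Sum>q<l. \<Sum>s<r. (A q s - A' q s)\<^sup>2) + (\<Sum>q<l. (b q - b' q)\<^sup>2)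
          + (\<Sum>p<n*k. \<Sum>q<l. (C p q - C' p q)\<^sup>2) + (\<Sum>p<n*k. (d p - d' p)\<^sup>2)"
  assumes M1: "real l*D\<^sup>2*LZ2 \<le> Mx" and M2: "(real l)\<^sup>2*D^6*LZ2 \<le> Mx"
    and M3: "(real l)^3*D^4 \<le> Mx" and M4: "real n*real l \<le> Mx"
  shows "(\<Sum>q<l. (grad_b \<sigma> \<mu> n k l S A b C d q - grad_b \<sigma> \<mu> n k l S A' b' C' d' q)\<^sup>2)
     \<le> 10000*(1+s1)^4*(1+s2)^2*(1+m2)^2 * (real n)\<^sup>2 * D\<^sup>2 * Mx * P"
proof -
  define NK where "NK = n * k"
  define z where "z = (\<lambda>q. (\<Sum>s<r. A q s * x s) + b q)"
  define z' where "z' = (\<lambda>q. (\<Sum>s<r. A' q s * x s) + b' q)"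
  define y where "y = net \<sigma> r l A b C d x"
  define y' where "y' = net \<sigma> r l A' b' C' d' x"
  define w where "w = (\<lambda>i j. \<mu>1 ((\<Sum>u<k. y (i*k+u) * y (j*k+u)) - S i j))"
  define w' where "w' = (\<lambda>i j. \<mu>1 ((\<Sum>u<k. y' (i*k+u) * y' (j*k+u)) - S i j))"
  define Y where "Y = nn NK y"
  define Y' where "Y' = nn NK y'"
  define dY where "dY = nn NK (\<lambda>p. y p - y' p)"
  define SC where "SC = (\<Sum>p<NK. \<Sum>q<l. (C p q)\<^sup>2)"
  define SC' where "SC' = (\<Sum>p<NK. \<Sum>q<l. (C' p q)\<^sup>2)"
  define dSC where "dSC = (\<Sum>p<NK. \<Sum>q<l. (C p q - C' p q)\<^sup>2)"
  define dSd where "dSd = (\<Sum>p<NK. (d p - d' p)\<^sup>2)"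
  define dSAb where "dSAb = (\<Sum>q<l. \<Sum>s<r. (A q s - A' q s)\<^sup>2) + (\<Sum>q<l. (b q - b' q)\<^sup>2)"
  define col where "col = (\<lambda>(CC :: nat \<Rightarrow> nat \<Rightarrow> real) q. \<Sum>p<NK. (CC p q)\<^sup>2)"
  have s10: "0 \<le> s1" using s1b by (meson abs_ge_zero order_trans)
  have s20: "0 \<le> s2" using s2b by (meson abs_ge_zero order_trans)
  have m20: "0 \<le> m2" using m2b by (meson abs_ge_zero order_trans)
  have nnn: "0 \<le> nn N f" for N f unfolding nn_def by (simp add: sum_nonneg)
  have Y0: "0 \<le> Y" "0 \<le> Y'" "0 \<le> dY" unfolding Y_def Y'_def dY_def by (simp_all add: nnn)
  have P_eq: "P = dSAb + dSC + dSd" unfolding P_def dSAb_def dSC_def dSd_def NK_def by simp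
  have nonnegs: "0 \<le> dSAb" "0 \<le> dSC" "0 \<le> dSd" unfolding dSAb_def dSC_def dSd_def by (simp_all add: sum_nonneg)
  have P0: "0 \<le> P" using P_eq nonnegs by simp
  have SCd: "SC \<le> D\<^sup>2 \<and> (\<Sum>p<NK. (d p)\<^sup>2) \<le> D\<^sup>2"
  proof -
    let ?a = "(\<Sum>q<l. \<Sum>s<r. (A q s)\<^sup>2) + (\<Sum>q<l. (b q)\<^sup>2) + SC + (\<Sum>p<NK. (d p)\<^sup>2)"
    have "?a \<le> D\<^sup>2" using pn unfolding param_norm_def Let_def SC_def NK_def r_def
      by (intro sqrt_le_sq) (auto intro!: add_nonneg_nonneg sum_nonneg)
    moreover have "0 \<le> (\<Sum>q<l. \<Sum>s<r. (A q s)\<^sup>2)" "0 \<le> (\<Sum>q<l. (b q)\<^sup>2)" "0 \<le> SC" "0 \<le> (\<Sum>p<NK. (d p)\<^sup>2)"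
      unfolding SC_def by (simp_all add: sum_nonneg)
    ultimately show ?thesis by linarith
  qed
  have SCd': "SC' \<le> D\<^sup>2 \<and> (\<Sum>p<NK. (d' p)\<^sup>2) \<le> D\<^sup>2"
  proof -
    let ?a = "(\<Sum>q<l. \<Sum>s<r. (A' q s)\<^sup>2) + (\<Sum>q<l. (b' q)\<^sup>2) + SC' + (\<Sum>p<NK. (d' p)\<^sup>2)"
    have "?a \<le> D\<^sup>2" using pn' unfolding param_norm_def Let_def SC'_def NK_def r_def
      by (intro sqrt_le_sq) (auto intro!: add_nonneg_nonneg sum_nonneg)
    moreover have "0 \<le> (\<Sum>q<l. \<Sum>s<r. (A' q s)\<^sup>2)" "0 \<le> (\<Sum>q<l. (b' q)\<^sup>2)" "0 \<le> SC'" "0 \<le> (\<Sum>p<NK. (d' p)\<^sup>2)"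
      unfolding SC'_def by (simp_all add: sum_nonneg)
    ultimately show ?thesis by linarith
  qed
  have colsum: "(\<Sum>q<l. col CC q) = (\<Sum>p<NK. \<Sum>q<l. (CC p q)\<^sup>2)" for CC
    unfolding col_def by (simp add: sum.swap[of _ "{..<l}"])
  have col0: "0 \<le> col CC q" for CC q unfolding col_def by (simp add: sum_nonneg)
  have colle: "col CC q \<le> (\<Sum>p<NK. \<Sum>q<l. (CC p q)\<^sup>2)" if "q < l" for CC q
  proof -
    have "col CC q \<le> (\<Sum>q'<l. col CC q')"
      using that col0 by (intro member_le_sum) auto
    then show ?thesis using colsum by simp
  qed
  have colC: "col C q \<le> D\<^sup>2" if "q < l" for q using colle[OF that, of C] SCd unfolding SC_def by linarith
  have y_eq: "y = (\<lambda>p. (\<Sum>q<l. C p q * \<sigma> (z q)) + d p)" unfolding y_def z_def net_def by simp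
  have y'_eq: "y' = (\<lambda>p. (\<Sum>q<l. C' p q * \<sigma> (z' q)) + d' p)" unfolding y'_def z'_def net_def by simp
  have Yb: "Y \<le> 4 * real l * D\<^sup>2"
  proof -
    have "Y \<le> 2 * real l * SC + 2 * (\<Sum>p<NK. (d p)\<^sup>2)"
      unfolding Y_def nn_def y_eq SC_def using sb by (intro y_bound) auto
    also have "\<dots> \<le> 2 * real l * D\<^sup>2 + 2 * D\<^sup>2" using SCd l1 by (intro add_mono mult_left_mono) auto
    also have "\<dots> \<le> 4 * real l * D\<^sup>2" using l1 D0 by (simp add: algebra_simps)
    finally show ?thesis .
  qed
  have Y'b: "Y' \<le> 4 * real l * D\<^sup>2"
  proof -
    have "Y' \<le> 2 * real l * SC' + 2 * (\<Sum>p<NK. (d' p)\<^sup>2)"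
      unfolding Y'_def nn_def y'_eq SC'_def using sb by (intro y_bound) auto
    also have "\<dots> \<le> 2 * real l * D\<^sup>2 + 2 * D\<^sup>2" using SCd' l1 by (intro add_mono mult_left_mono) auto
    also have "\<dots> \<le> 4 * real l * D\<^sup>2" using l1 D0 by (simp add: algebra_simps)
    finally show ?thesis .
  qed
  have dzq: "(z q - z' q)\<^sup>2 \<le> LZ2 * ((\<Sum>s<r. (A q s - A' q s)\<^sup>2) + (b q - b' q)\<^sup>2)" for q
  proof -
    have "z q - z' q = (\<Sum>s<r. (A q s - A' q s) * x s) + (b q - b' q)"
      unfolding z_def z'_def by (simp add: sum_subtractf[symmetric] algebra_simps)
    then show ?thesis unfolding LZ2_def using dz_bound[where r=r and a="\<lambda>s. A q s - A' q s" and x=x and \<beta>="b q - b' q"] by simp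
  qed
  have LZ1: "1 \<le> LZ2" unfolding LZ2_def by (simp add: sum_nonneg)
  have dz: "(\<Sum>q<l. (z q - z' q)\<^sup>2) \<le> LZ2 * P"
  proof -
    have "(\<Sum>q<l. (z q - z' q)\<^sup>2) \<le> (\<Sum>q<l. LZ2 * ((\<Sum>s<r. (A q s - A' q s)\<^sup>2) + (b q - b' q)\<^sup>2))"
      by (intro sum_mono dzq)
    also have "\<dots> = LZ2 * dSAb" unfolding dSAb_def by (simp only: sum_distrib_left[symmetric] sum.distrib)
    also have "\<dots> \<le> LZ2 * P" using P_eq nonnegs LZ1 by (intro mult_left_mono) auto
    finally show ?thesis .
  qed
  have du: "(\<Sum>q<l. (\<sigma> (z q) - \<sigma> (z' q))\<^sup>2) \<le> s1\<^sup>2 * (LZ2 * P)"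
  proof -
    have "(\<Sum>q<l. (\<sigma> (z q) - \<sigma> (z' q))\<^sup>2) \<le> (\<Sum>q<l. s1\<^sup>2 * (z q - z' q)\<^sup>2)"
      using lip_deriv[OF sd s1b] s10 by (intro sum_mono sq_from_abs) auto
    also have "\<dots> = s1\<^sup>2 * (\<Sum>q<l. (z q - z' q)\<^sup>2)" by (simp add: sum_distrib_left)
    also have "\<dots> \<le> s1\<^sup>2 * (LZ2 * P)" using dz by (intro mult_left_mono) auto
    finally show ?thesis .
  qed
  have dYb: "dY \<le> 3 * (real l + D\<^sup>2 * s1\<^sup>2 * LZ2 + 1) * P"
  proof -
    have "dY \<le> 3 * real l * dSC + 3 * SC' * (\<Sum>q<l. (\<sigma> (z q) - \<sigma> (z' q))\<^sup>2) + 3 * dSd"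
      unfolding dY_def nn_def y_eq y'_eq dSC_def SC'_def dSd_def using sb by (intro dy_bound) auto
    also have "\<dots> \<le> 3 * real l * P + 3 * D\<^sup>2 * (s1\<^sup>2 * (LZ2 * P)) + 3 * P"
    proof -
      have "dSC \<le> P" "dSd \<le> P" using P_eq nonnegs by linarith+
      moreover have "SC' * (\<Sum>q<l. (\<sigma> (z q) - \<sigma> (z' q))\<^sup>2) \<le> D\<^sup>2 * (s1\<^sup>2 * (LZ2 * P))"
        using SCd' du by (intro mult_mono) (auto simp: SC'_def sum_nonneg)
      moreover have "real l * dSC \<le> real l * P" using \<open>dSC \<le> P\<close> by (intro mult_left_mono) auto
      ultimately show ?thesis by linarith
    qed
    also have "\<dots> = 3 * (real l + D\<^sup>2 * s1\<^sup>2 * LZ2 + 1) * P" by (simp add: algebra_simps)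
    finally show ?thesis .
  qed
  have wb: "\<bar>w i j\<bar> \<le> 1" "\<bar>w' i j\<bar> \<le> 1" for i j unfolding w_def w'_def using m1b by auto
  have W2w: "W2 n w \<le> (real n)\<^sup>2" "W2 n w' \<le> (real n)\<^sup>2" using W2_le wb by blast+
  have W2dw: "W2 n (\<lambda>i j. w i j - w' i j) \<le> m2\<^sup>2 * (2 * dY * Y + 2 * Y' * dY)"
  proof -
    have "W2 n (\<lambda>i j. w i j - w' i j) \<le> (\<Sum>i<n. \<Sum>j<n. m2\<^sup>2 * (blk k (\<lambda>p. y p - y' p) y i j + blk k y' (\<lambda>p. y p - y' p) i j)\<^sup>2)"
      unfolding W2_def
    proof (intro sum_mono)
      fix i j
      let ?a = "(\<Sum>u<k. y (i*k+u) * y (j*k+u)) - S i j"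
      let ?b = "(\<Sum>u<k. y' (i*k+u) * y' (j*k+u)) - S i j"
      have "(\<mu>1 ?a - \<mu>1 ?b)\<^sup>2 \<le> m2\<^sup>2 * (?a - ?b)\<^sup>2"
        by (rule sq_from_abs[OF lip_deriv[OF m1d m2b] m20])
      then show "(w i j - w' i j)\<^sup>2 \<le> m2\<^sup>2 * (blk k (\<lambda>p. y p - y' p) y i j + blk k y' (\<lambda>p. y p - y' p) i j)\<^sup>2"
        unfolding w_def w'_def E_diff .
    qed
    also have "\<dots> = m2\<^sup>2 * W2 n (\<lambda>i j. blk k (\<lambda>p. y p - y' p) y i j + blk k y' (\<lambda>p. y p - y' p) i j)"
      unfolding W2_def by (simp add: sum_distrib_left)
    also have "\<dots> \<le> m2\<^sup>2 * (2 * W2 n (blk k (\<lambda>p. y p - y' p) y) + 2 * W2 n (blk k y' (\<lambda>p. y p - y' p)))"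
      by (intro mult_left_mono W2_add) auto
    also have "\<dots> \<le> m2\<^sup>2 * (2 * (dY * Y) + 2 * (Y' * dY))"
      using blk_bound[where n=n and k=k and a="\<lambda>p. y p - y' p" and c=y] blk_bound[where n=n and k=k and a=y' and c="\<lambda>p. y p - y' p"]
      unfolding W2_def dY_def Y_def Y'_def NK_def
      by (intro mult_left_mono add_mono) auto
    finally show ?thesis by (simp add: algebra_simps)
  qed
  define Wd where "Wd = m2\<^sup>2 * (2 * dY * Y + 2 * Y' * dY)"
  have perq: "(grad_b \<sigma> \<mu> n k l S A b C d q - grad_b \<sigma> \<mu> n k l S A' b' C' d' q)\<^sup>2 \<le>
      (16 * s2\<^sup>2 * (real n)\<^sup>2 * D\<^sup>2 * Y) * (z q - z' q)\<^sup>2 + (16 * s1\<^sup>2 * Wd * Y) * col C q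
      + (16 * s1\<^sup>2 * (real n)\<^sup>2 * Y) * col (\<lambda>p q. C p q - C' p q) q + (16 * s1\<^sup>2 * (real n)\<^sup>2 * dY) * col C' q"
    if q: "q < l" for q
  proof -
    define F0 where "F0 = FF n k w (\<lambda>p. C p q) y"
    define F1 where "F1 = FF n k (\<lambda>i j. w i j - w' i j) (\<lambda>p. C p q) y"
    define F2 where "F2 = FF n k w' (\<lambda>p. C p q - C' p q) y"
    define F3 where "F3 = FF n k w' (\<lambda>p. C' p q) (\<lambda>p. y p - y' p)"
    have g: "grad_b \<sigma> \<mu> n k l S A b C d q = \<sigma>1 (z q) * F0"
      unfolding F0_def w_def y_def z_def r_def x_def by (rule grad_formula[OF sd md q])
    have g': "grad_b \<sigma> \<mu> n k l S A' b' C' d' q = \<sigma>1 (z' q) * FF n k w' (\<lambda>p. C' p q) y'"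
      unfolding w'_def y'_def z'_def r_def x_def by (rule grad_formula[OF sd md q])
    have dF: "F0 - FF n k w' (\<lambda>p. C' p q) y' = F1 + F2 + F3"
      unfolding F0_def F1_def F2_def F3_def by (rule FF_diff)
    have "grad_b \<sigma> \<mu> n k l S A b C d q - grad_b \<sigma> \<mu> n k l S A' b' C' d' q
        = (\<sigma>1 (z q) - \<sigma>1 (z' q)) * F0 + \<sigma>1 (z' q) * F1 + \<sigma>1 (z' q) * F2 + \<sigma>1 (z' q) * F3"
      unfolding g g' using dF by (simp add: algebra_simps)
    then have "(grad_b \<sigma> \<mu> n k l S A b C d q - grad_b \<sigma> \<mu> n k l S A' b' C' d' q)\<^sup>2
       \<le> 4 * ((\<sigma>1 (z q) - \<sigma>1 (z' q)) * F0)\<^sup>2 + 4 * (\<sigma>1 (z' q) * F1)\<^sup>2 + 4 * (\<sigma>1 (z' q) * F2)\<^sup>2 + 4 * (\<sigma>1 (z' q) * F3)\<^sup>2"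
      using sq_add4 by simp
    moreover have "((\<sigma>1 (z q) - \<sigma>1 (z' q)) * F0)\<^sup>2 \<le> (s2\<^sup>2 * (z q - z' q)\<^sup>2) * (4 * (real n)\<^sup>2 * D\<^sup>2 * Y)"
    proof -
      have a: "(\<sigma>1 (z q) - \<sigma>1 (z' q))\<^sup>2 \<le> s2\<^sup>2 * (z q - z' q)\<^sup>2"
        using lip_deriv[OF s1d s2b] s20 by (intro sq_from_abs) auto
      have "F0\<^sup>2 \<le> 4 * W2 n w * col C q * Y"
        unfolding F0_def col_def Y_def NK_def nn_def[symmetric] by (rule FF_bound)
      also have "\<dots> \<le> 4 * (real n)\<^sup>2 * D\<^sup>2 * Y"
        using W2w colC[OF q] Y0 col0 by (intro mult_mono mult_left_mono) (auto simp: W2_def sum_nonneg)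
      finally show ?thesis unfolding power_mult_distrib using a by (intro mult_mono) auto
    qed
    moreover have "(\<sigma>1 (z' q) * F1)\<^sup>2 \<le> s1\<^sup>2 * (4 * Wd * col C q * Y)"
    proof -
      have a: "(\<sigma>1 (z' q))\<^sup>2 \<le> s1\<^sup>2" using s1b s10 by (simp add: abs_le_square_iff[symmetric] power2_abs)
      have "F1\<^sup>2 \<le> 4 * W2 n (\<lambda>i j. w i j - w' i j) * col C q * Y"
        unfolding F1_def col_def Y_def NK_def nn_def[symmetric] by (rule FF_bound)
      also have "\<dots> \<le> 4 * Wd * col C q * Y"
        using W2dw Y0 col0 unfolding Wd_def by (intro mult_right_mono mult_left_mono) auto
      finally show ?thesis unfolding power_mult_distrib using a by (intro mult_mono) auto
    qed
    moreover have "(\<sigma>1 (z' q) * F2)\<^sup>2 \<le> s1\<^sup>2 * (4 * (real n)\<^sup>2 * col (\<lambda>p q. C p q - C' p q) q * Y)"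
    proof -
      have a: "(\<sigma>1 (z' q))\<^sup>2 \<le> s1\<^sup>2" using s1b s10 by (metis abs_le_square_iff abs_of_nonneg)
      have "F2\<^sup>2 \<le> 4 * W2 n w' * col (\<lambda>p q. C p q - C' p q) q * Y"
        unfolding F2_def col_def Y_def NK_def nn_def[symmetric] by (rule FF_bound)
      also have "\<dots> \<le> 4 * (real n)\<^sup>2 * col (\<lambda>p q. C p q - C' p q) q * Y"
        using W2w Y0 col0 by (intro mult_right_mono mult_left_mono) auto
      finally show ?thesis unfolding power_mult_distrib using a by (intro mult_mono) auto
    qed
    moreover have "(\<sigma>1 (z' q) * F3)\<^sup>2 \<le> s1\<^sup>2 * (4 * (real n)\<^sup>2 * col C' q * dY)"
    proof -
      have a: "(\<sigma>1 (z' q))\<^sup>2 \<le> s1\<^sup>2" using s1b s10 by (metis abs_le_square_iff abs_of_nonneg)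
      have "F3\<^sup>2 \<le> 4 * W2 n w' * col C' q * dY"
        unfolding F3_def col_def dY_def NK_def nn_def[symmetric] by (rule FF_bound)
      also have "\<dots> \<le> 4 * (real n)\<^sup>2 * col C' q * dY"
        using W2w Y0 col0 by (intro mult_right_mono mult_left_mono) auto
      finally show ?thesis unfolding power_mult_distrib using a by (intro mult_mono) auto
    qed
    ultimately show ?thesis by (simp add: algebra_simps)
  qed
  have "(\<Sum>q<l. (grad_b \<sigma> \<mu> n k l S A b C d q - grad_b \<sigma> \<mu> n k l S A' b' C' d' q)\<^sup>2) \<le>
      (\<Sum>q<l. (16 * s2\<^sup>2 * (real n)\<^sup>2 * D\<^sup>2 * Y) * (z q - z' q)\<^sup>2 + (16 * s1\<^sup>2 * Wd * Y) * col C q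
      + (16 * s1\<^sup>2 * (real n)\<^sup>2 * Y) * col (\<lambda>p q. C p q - C' p q) q + (16 * s1\<^sup>2 * (real n)\<^sup>2 * dY) * col C' q)"
    by (intro sum_mono perq) auto
  also have "\<dots> = (16 * s2\<^sup>2 * (real n)\<^sup>2 * D\<^sup>2 * Y) * (\<Sum>q<l. (z q - z' q)\<^sup>2) + (16 * s1\<^sup>2 * Wd * Y) * SC
      + (16 * s1\<^sup>2 * (real n)\<^sup>2 * Y) * dSC + (16 * s1\<^sup>2 * (real n)\<^sup>2 * dY) * SC'"
    unfolding sum4_lin colsum SC_def SC'_def dSC_def ..
  also have "\<dots> \<le> (16 * s2\<^sup>2 * (real n)\<^sup>2 * D\<^sup>2 * Y) * (LZ2 * P) + (16 * s1\<^sup>2 * Wd * Y) * D\<^sup>2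
      + (16 * s1\<^sup>2 * (real n)\<^sup>2 * Y) * P + (16 * s1\<^sup>2 * (real n)\<^sup>2 * dY) * D\<^sup>2"
  proof -
    have Wd0: "0 \<le> Wd" unfolding Wd_def using Y0 by simp
    have "dSC \<le> P" using P_eq nonnegs by linarith
    then show ?thesis using dz SCd SCd' Y0 Wd0
      by (intro add_mono mult_left_mono) auto
  qed
  also have "\<dots> = 4*(s2\<^sup>2 * (4*(real n)\<^sup>2*D\<^sup>2*Y) * (LZ2*P) + s1\<^sup>2*(4*m2\<^sup>2*(2*dY*Y + 2*Y'*dY)*Y*D\<^sup>2)
                 + s1\<^sup>2*(4*(real n)\<^sup>2*P*Y) + s1\<^sup>2*(4*(real n)\<^sup>2*D\<^sup>2*dY))"
    unfolding Wd_def by (simp add: algebra_simps)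
  finally have T: "(\<Sum>q<l. (grad_b \<sigma> \<mu> n k l S A b C d q - grad_b \<sigma> \<mu> n k l S A' b' C' d' q)\<^sup>2) \<le> \<dots>" .
  show ?thesis
    using n1 l1 D0 LZ1 P0 s10 s20 m20 M1 M2 M3 M4 Y0 Yb Y'b dYb
    by (intro final_arith[OF _ _ _ _ _ _ _ _ _ _ _ _ _ _ _ _ _ _ T]) auto
qed

theorem lemma4:
  "\<exists>(a :: nat \<Rightarrow> nat \<Rightarrow> nat \<Rightarrow> real) (N :: nat).
    \<forall>(\<sigma> :: real \<Rightarrow> real) \<sigma>1 \<sigma>2 (s1 :: real) (s2 :: real)
      (\<mu> :: real \<Rightarrow> real) \<mu>1 \<mu>2 (m2 :: real)
      (n :: nat) (k :: nat) (l :: nat) (S :: nat \<Rightarrow> nat \<Rightarrow> real) (D :: real).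
      ((\<forall>x. (\<sigma> has_real_derivative \<sigma>1 x) (at x)) \<and>
       (\<forall>x. (\<sigma>1 has_real_derivative \<sigma>2 x) (at x)) \<and>
       (\<forall>x. \<bar>\<sigma> x\<bar> \<le> 1) \<and>
       s1 > 0 \<and> (\<forall>x. \<bar>\<sigma>1 x\<bar> \<le> s1) \<and> (\<forall>x. \<bar>\<sigma>2 x\<bar> \<le> s2) \<and>
       smooth_fun \<mu> \<and>
       (\<forall>x. (\<mu> has_real_derivative \<mu>1 x) (at x)) \<and>
       (\<forall>x. (\<mu>1 has_real_derivative \<mu>2 x) (at x)) \<and>
       (\<forall>x. \<bar>\<mu>1 x\<bar> \<le> 1) \<and> (\<forall>x. \<bar>\<mu>2 x\<bar> \<le> m2) \<and>
       1 \<le> n \<and> 1 \<le> k \<and> k \<le> n \<and> 1 \<le> l \<and>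
       (\<forall>i<n. \<forall>j<n. S i j = S j i) \<and> D > 0)
      \<longrightarrow>
      (let LZ = sqrt (1 + (normS n S)\<^sup>2);
           Cb = (\<Sum>i\<le>N. \<Sum>j\<le>N. \<Sum>p\<le>N. a i j p * s1 ^ i * s2 ^ j * m2 ^ p)
       in \<exists>Lb. Lb \<ge> 0 \<and>
            Lb\<^sup>2 = Cb * (real n)\<^sup>2 * D\<^sup>2 *
                  Max {real l * D\<^sup>2 * LZ\<^sup>2, (real l)\<^sup>2 * D ^ 6 * LZ\<^sup>2,
                       (real l) ^ 3 * D ^ 4, real n * real l} \<and>
            (\<forall>A b C d A' b' C' d'.
               param_norm n k l A b C d \<le> D \<longrightarrow> param_norm n k l A' b' C' d' \<le> D \<longrightarrow>
               vnorm l (\<lambda>q. grad_b \<sigma> \<mu> n k l S A b C d q - grad_b \<sigma> \<mu> n k l S A' b' C' d' q)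
                 \<le> Lb * param_norm n k l (\<lambda>q s. A q s - A' q s) (\<lambda>q. b q - b' q)
                                          (\<lambda>p q. C p q - C' p q) (\<lambda>p. d p - d' p)))"
proof -
  obtain a N where aN: "\<forall>s1 s2 m2::real. (\<Sum>i\<le>N. \<Sum>j\<le>N. \<Sum>p\<le>N. a i j p * s1 ^ i * s2 ^ j * m2 ^ p) = 10000*(1+s1)^4*(1+s2)^2*(1+m2)^2"
    using poly_wit by blast
  show ?thesis
  proof (rule exI[of _ a], rule exI[of _ N], intro allI impI)
    fix \<sigma> \<sigma>1 \<sigma>2 :: "real \<Rightarrow> real" and s1 s2 :: real and \<mu> \<mu>1 \<mu>2 :: "real \<Rightarrow> real" and m2 :: real
      and n k l :: nat and S :: "nat \<Rightarrow> nat \<Rightarrow> real" and D :: real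
    assume H: "(\<forall>x. (\<sigma> has_real_derivative \<sigma>1 x) (at x)) \<and>
       (\<forall>x. (\<sigma>1 has_real_derivative \<sigma>2 x) (at x)) \<and>
       (\<forall>x. \<bar>\<sigma> x\<bar> \<le> 1) \<and>
       s1 > 0 \<and> (\<forall>x. \<bar>\<sigma>1 x\<bar> \<le> s1) \<and> (\<forall>x. \<bar>\<sigma>2 x\<bar> \<le> s2) \<and>
       smooth_fun \<mu> \<and>
       (\<forall>x. (\<mu> has_real_derivative \<mu>1 x) (at x)) \<and>
       (\<forall>x. (\<mu>1 has_real_derivative \<mu>2 x) (at x)) \<and>
       (\<forall>x. \<bar>\<mu>1 x\<bar> \<le> 1) \<and> (\<forall>x. \<bar>\<mu>2 x\<bar> \<le> m2) \<and>
       1 \<le> n \<and> 1 \<le> k \<and> k \<le> n \<and> 1 \<le> l \<and>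
       (\<forall>i<n. \<forall>j<n. S i j = S j i) \<and> D > 0"
    then have sd: "\<forall>x. (\<sigma> has_real_derivative \<sigma>1 x) (at x)"
      and s1d: "\<forall>x. (\<sigma>1 has_real_derivative \<sigma>2 x) (at x)"
      and sb: "\<forall>x. \<bar>\<sigma> x\<bar> \<le> 1" and s1b: "\<forall>x. \<bar>\<sigma>1 x\<bar> \<le> s1" and s2b: "\<forall>x. \<bar>\<sigma>2 x\<bar> \<le> s2"
      and md: "\<forall>x. (\<mu> has_real_derivative \<mu>1 x) (at x)"
      and m1d: "\<forall>x. (\<mu>1 has_real_derivative \<mu>2 x) (at x)"
      and m1b: "\<forall>x. \<bar>\<mu>1 x\<bar> \<le> 1" and m2b: "\<forall>x. \<bar>\<mu>2 x\<bar> \<le> m2"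
      and n1: "1 \<le> n" and l1: "1 \<le> l" and D0: "0 < D" by auto
    define LZ where "LZ = sqrt (1 + (normS n S)\<^sup>2)"
    define Cb where "Cb = (\<Sum>i\<le>N. \<Sum>j\<le>N. \<Sum>p\<le>N. a i j p * s1 ^ i * s2 ^ j * m2 ^ p)"
    define Mx where "Mx = Max {real l * D\<^sup>2 * LZ\<^sup>2, (real l)\<^sup>2 * D ^ 6 * LZ\<^sup>2, (real l) ^ 3 * D ^ 4, real n * real l}"
    define Lb where "Lb = sqrt (Cb * (real n)\<^sup>2 * D\<^sup>2 * Mx)"
    have Cb_eq: "Cb = 10000*(1+s1)^4*(1+s2)^2*(1+m2)^2" unfolding Cb_def using aN by blast
    have LZ2: "LZ\<^sup>2 = 1 + (\<Sum>s<n * (n + 1) div 2. ((\<lambda>s. hvec n S ! s) s)\<^sup>2)"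
      unfolding LZ_def normS_sq[symmetric] by simp
    have M1: "real l*D\<^sup>2*LZ\<^sup>2 \<le> Mx" and M2: "(real l)\<^sup>2*D^6*LZ\<^sup>2 \<le> Mx"
      and M3: "(real l)^3*D^4 \<le> Mx" and M4: "real n*real l \<le> Mx"
      unfolding Mx_def by (auto intro: Max_ge)
    have Cb0: "0 \<le> Cb" unfolding Cb_eq using s1b s2b m2b
      by (intro mult_nonneg_nonneg) (auto intro!: zero_le_power simp: zero_le_even_power)
    have Mx0: "0 \<le> Mx" using M4 by (smt (verit) of_nat_0_le_iff mult_nonneg_nonneg)
    have K0: "0 \<le> Cb * (real n)\<^sup>2 * D\<^sup>2 * Mx" using Cb0 Mx0 by simp
    have lip: "vnorm l (\<lambda>q. grad_b \<sigma> \<mu> n k l S A b C d q - grad_b \<sigma> \<mu> n k l S A' b' C' d' q)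
                 \<le> Lb * param_norm n k l (\<lambda>q s. A q s - A' q s) (\<lambda>q. b q - b' q)
                                          (\<lambda>p q. C p q - C' p q) (\<lambda>p. d p - d' p)"
      if pn: "param_norm n k l A b C d \<le> D" and pn': "param_norm n k l A' b' C' d' \<le> D" for A b C d A' b' C' d'
    proof -
      let ?P = "(\<Sum>q<l. \<Sum>s<n * (n + 1) div 2. (A q s - A' q s)\<^sup>2) + (\<Sum>q<l. (b q - b' q)\<^sup>2)
          + (\<Sum>p<n*k. \<Sum>q<l. (C p q - C' p q)\<^sup>2) + (\<Sum>p<n*k. (d p - d' p)\<^sup>2)"
      have est: "(\<Sum>q<l. (grad_b \<sigma> \<mu> n k l S A b C d q - grad_b \<sigma> \<mu> n k l S A' b' C' d' q)\<^sup>2)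
           \<le> Cb * (real n)\<^sup>2 * D\<^sup>2 * Mx * ?P"
        unfolding Cb_eq
        by (rule main_est[OF sd s1d sb s1b s2b md m1d m1b m2b n1 l1 D0 pn pn' M1[unfolded LZ2] M2[unfolded LZ2] M3 M4])
      have "vnorm l (\<lambda>q. grad_b \<sigma> \<mu> n k l S A b C d q - grad_b \<sigma> \<mu> n k l S A' b' C' d' q)
          \<le> sqrt (Cb * (real n)\<^sup>2 * D\<^sup>2 * Mx * ?P)"
        unfolding vnorm_def using est by (rule real_sqrt_le_mono)
      also have "\<dots> = Lb * sqrt ?P" unfolding Lb_def by (simp add: real_sqrt_mult)
      also have "sqrt ?P = param_norm n k l (\<lambda>q s. A q s - A' q s) (\<lambda>q. b q - b' q)
                                          (\<lambda>p q. C p q - C' p q) (\<lambda>p. d p - d' p)"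
        unfolding param_norm_def Let_def by simp
      finally show ?thesis .
    qed
    have "Lb \<ge> 0 \<and> Lb\<^sup>2 = Cb * (real n)\<^sup>2 * D\<^sup>2 * Mx \<and>
            (\<forall>A b C d A' b' C' d'.
               param_norm n k l A b C d \<le> D \<longrightarrow> param_norm n k l A' b' C' d' \<le> D \<longrightarrow>
               vnorm l (\<lambda>q. grad_b \<sigma> \<mu> n k l S A b C d q - grad_b \<sigma> \<mu> n k l S A' b' C' d' q)
                 \<le> Lb * param_norm n k l (\<lambda>q s. A q s - A' q s) (\<lambda>q. b q - b' q)
                                          (\<lambda>p q. C p q - C' p q) (\<lambda>p. d p - d' p))"
      using lip K0 unfolding Lb_def by auto
    then show "let LZ = sqrt (1 + (normS n S)\<^sup>2);
           Cb = (\<Sum>i\<le>N. \<Sum>j\<le>N. \<Sum>p\<le>N. a i j p * s1 ^ i * s2 ^ j * m2 ^ p)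
       in \<exists>Lb. Lb \<ge> 0 \<and>
            Lb\<^sup>2 = Cb * (real n)\<^sup>2 * D\<^sup>2 *
                  Max {real l * D\<^sup>2 * LZ\<^sup>2, (real l)\<^sup>2 * D ^ 6 * LZ\<^sup>2,
                       (real l) ^ 3 * D ^ 4, real n * real l} \<and>
            (\<forall>A b C d A' b' C' d'.
               param_norm n k l A b C d \<le> D \<longrightarrow> param_norm n k l A' b' C' d' \<le> D \<longrightarrow>
               vnorm l (\<lambda>q. grad_b \<sigma> \<mu> n k l S A b C d q - grad_b \<sigma> \<mu> n k l S A' b' C' d' q)
                 \<le> Lb * param_norm n k l (\<lambda>q s. A q s - A' q s) (\<lambda>q. b q - b' q)
                                          (\<lambda>p q. C p q - C' p q) (\<lambda>p. d p - d' p))"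
      unfolding Let_def LZ_def[symmetric] Cb_def[symmetric] Mx_def[symmetric] by blast
  qed
qed

end
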